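(* Let $I,S\ge 0$ be integers and consider the pairing process described in the context. If $j>\lfloor I/2\rfloor$ or $j<L(I,S)$, then no possible wiring has exactly $j$ bb-pairings. If $L(I,S)\le j\le\lfloor I/2\rfloor$, then every possible wiring with exactly $j$ bb-pairings occurs with probability $$\prod_{k=0}^{I-j-1-z}\frac{1}{I+S-1-2k},$$ where $z=1$ if $(I,S,j)$ is in the dagger case and $z=0$ otherwise.
   Context: Pairing process: there are $I$ infected devices $b_1,\dots,b_I$ and $S$ clean devices $w_1,\dots,w_S$. For $t=1,\dots,I$ in this order: if $b_t$ is not yet paired and at least one device other than $b_t$ is not yet paired, then $b_t$ chooses one of the currently unpaired devices other than itself uniformly at random, independently of previous choices, and becomes paired with it; otherwise $b_t$ does nothing. Each device belongs to at most one pair. The wiring is the final set of pairs; a bb-pairing is a pair consisting of two infected devices; a wiring is possible if it occurs with positive probability. $L(I,S)=0$ if $I\le S$; $L(I,S)=\frac{I-S}{2}$ if $I>S$ and $I-S$ is even; $L(I,S)=\frac{I-S-1}{2}$ if $I>S$ and $I-S$ is odd. $(I,S,j)$ is in the dagger case if $I>S$, $I+S$ is odd and $j=\frac{I-S-1}{2}$. *)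

theory Defs
  imports "HOL-Probability.Probability"
begin

text \<open>Devices are the natural numbers 0,...,I+S-1. Infected device b_(t+1) is the
number t (t < I); clean devices are I,...,I+S-1. A wiring is a set of pairs,
each pair being a two-element set of devices.\<close>

definition unpaired :: "nat \<Rightarrow> nat \<Rightarrow> nat set set \<Rightarrow> nat \<Rightarrow> nat set" where
  "unpaired I S W t = {u. u < I + S \<and> u \<noteq> t \<and> u \<notin> \<Union>W}"

definition step :: "nat \<Rightarrow> nat \<Rightarrow> nat \<Rightarrow> nat set set \<Rightarrow> nat set set pmf" where
  "step I S t W =
     (if t \<notin> \<Union>W \<and> unpaired I S W t \<noteq> {}
      then map_pmf (\<lambda>u. insert {t, u} W) (pmf_of_set (unpaired I S W t))
      else return_pmf W)"

definition wiring_pmf :: "nat \<Rightarrow> nat \<Rightarrow> nat set set pmf" where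
  "wiring_pmf I S = foldl (\<lambda>p t. bind_pmf p (step I S t)) (return_pmf {}) [0..<I]"

definition possible_wiring :: "nat \<Rightarrow> nat \<Rightarrow> nat set set \<Rightarrow> bool" where
  "possible_wiring I S W \<longleftrightarrow> pmf (wiring_pmf I S) W > 0"

definition bb_count :: "nat \<Rightarrow> nat set set \<Rightarrow> nat" where
  "bb_count I W = card {p \<in> W. p \<subseteq> {0..<I}}"

definition L :: "nat \<Rightarrow> nat \<Rightarrow> nat" where
  "L I S = (if I \<le> S then 0
            else if even (I - S) then (I - S) div 2 else (I - S - 1) div 2)"

definition dagger :: "nat \<Rightarrow> nat \<Rightarrow> nat \<Rightarrow> bool" where
  "dagger I S j \<longleftrightarrow> I > S \<and> odd (I + S) \<and> 2 * j + 1 = I - S"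

end

theory Submission imports Defs begin

definition Inv :: "nat \<Rightarrow> nat \<Rightarrow> nat \<Rightarrow> nat set set \<Rightarrow> bool" where
 "Inv I S t W \<longleftrightarrow> (\<forall>p\<in>W. \<exists>a b. p = {a,b} \<and> a < b \<and> a < t \<and> b < I+S)
   \<and> (\<forall>p\<in>W. \<forall>q\<in>W. p \<noteq> q \<longrightarrow> p \<inter> q = {})
   \<and> (\<forall>a<t. a \<notin> \<Union>W \<longrightarrow> (\<forall>u<I+S. u \<noteq> a \<longrightarrow> u \<in> \<Union>W))"

lemma Inv_pair: "Inv I S t W \<Longrightarrow> p \<in> W \<Longrightarrow> \<exists>a b. p = {a,b} \<and> a < b \<and> a < t \<and> b < I+S"
  unfolding Inv_def by blast

lemma Inv_sub: "Inv I S t W \<Longrightarrow> \<Union>W \<subseteq> {..<I+S}"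
proof
  fix x assume inv: "Inv I S t W" and "x \<in> \<Union>W"
  then obtain p where "p \<in> W" "x \<in> p" by blast
  then obtain a b where "p = {a,b}" "a < b" "b < I+S" using Inv_pair[OF inv] by blast
  then show "x \<in> {..<I+S}" using \<open>x \<in> p\<close> by auto
qed

lemma Inv_fin: "Inv I S t W \<Longrightarrow> finite W"
proof -
  assume "Inv I S t W"
  hence "W \<subseteq> Pow {..<I+S}" using Inv_sub by blast
  thus ?thesis by (rule finite_subset) auto
qed

lemma Inv_card: assumes "Inv I S t W" shows "card (\<Union>W) = 2 * card W"
proof -
  have c2: "\<And>p. p \<in> W \<Longrightarrow> card p = 2 \<and> finite p"
  proof -
    fix p assume "p \<in> W"
    then obtain a b where "p = {a,b}" "a < b" using Inv_pair[OF assms] by blast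
    then show "card p = 2 \<and> finite p" by simp
  qed
  have "card (\<Union>W) = sum card W"
  proof (rule card_Union_disjoint)
    show "pairwise disjnt W" unfolding pairwise_def disjnt_def using assms unfolding Inv_def by blast
    show "\<And>A. A \<in> W \<Longrightarrow> finite A" using c2 by blast
  qed
  also have "\<dots> = sum (\<lambda>_. 2) W"
    by (rule sum.cong) (simp_all add: c2)
  finally show ?thesis by simp
qed

definition pred :: "nat \<Rightarrow> nat set set \<Rightarrow> nat set set" where
  "pred t W = {p\<in>W. Min p \<noteq> t}"

definition P :: "nat \<Rightarrow> nat \<Rightarrow> nat \<Rightarrow> real" where
  "P I S m = (\<Prod>k<m. 1 / (real (I+S) - 1 - 2 * real k))"

lemma Inv_min: "Inv I S t W \<Longrightarrow> p \<in> W \<Longrightarrow> Min p < t"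
proof -
  assume "Inv I S t W" "p \<in> W"
  then obtain a b where "p = {a,b}" "a < b" "a < t" using Inv_pair by blast
  then show ?thesis by (simp add: min_def)
qed

lemma Inv_pred: assumes "Inv I S t W" shows "pred t W = W"
proof -
  have "\<forall>p\<in>W. Min p \<noteq> t" using Inv_min[OF assms] by (metis less_irrefl)
  then show ?thesis unfolding pred_def by blast
qed

lemma step_lemma:
  assumes t: "t < I" and inv: "Inv I S t W'" and W: "W \<in> set_pmf (step I S t W')"
  shows "Inv I S (Suc t) W \<and> W' = pred t W \<and> P I S (card W) = P I S (card W') * pmf (step I S t W') W"
proof (cases "t \<notin> \<Union>W' \<and> unpaired I S W' t \<noteq> {}")
  case False
  have I2: "\<forall>p\<in>W'. \<forall>q\<in>W'. p \<noteq> q \<longrightarrow> p \<inter> q = {}" using inv by (simp add: Inv_def)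
  have I3: "\<forall>a<t. a \<notin> \<Union>W' \<longrightarrow> (\<forall>v<I+S. v \<noteq> a \<longrightarrow> v \<in> \<Union>W')" using inv by (simp add: Inv_def)
  have st: "step I S t W' = return_pmf W'" using False unfolding step_def by (simp only: if_False)
  with W have WW: "W = W'" by simp
  have c3: "\<forall>a<Suc t. a \<notin> \<Union>W' \<longrightarrow> (\<forall>u<I+S. u \<noteq> a \<longrightarrow> u \<in> \<Union>W')"
  proof (intro allI impI)
    fix a u assume a: "a < Suc t" "a \<notin> \<Union>W'" and u: "u < I+S" "u \<noteq> a"
    show "u \<in> \<Union>W'"
    proof (cases "a = t")
      case True
      then have "t \<notin> \<Union>W'" using a by simp
      then have "unpaired I S W' t = {}" using False by simp
      then have "u \<notin> unpaired I S W' t" by simp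
      then show ?thesis using u True unfolding unpaired_def by simp
    next
      case False
      then have "a < t" using a by simp
      then show ?thesis using I3 a u by blast
    qed
  qed
  have c1: "\<forall>p\<in>W'. \<exists>a b. p = {a,b} \<and> a < b \<and> a < Suc t \<and> b < I+S"
  proof
    fix p assume "p \<in> W'"
    then obtain a b where "p = {a,b}" "a < b" "a < t" "b < I+S" using Inv_pair[OF inv] by blast
    then show "\<exists>a b. p = {a,b} \<and> a < b \<and> a < Suc t \<and> b < I+S" by (intro exI[of _ a] exI[of _ b]) simp
  qed
  have "Inv I S (Suc t) W"
    unfolding WW Inv_def using c1 I2 c3 by (intro conjI)
  then show ?thesis using Inv_pred[OF inv] st WW by simp
next
  case True
  have I2: "\<forall>p\<in>W'. \<forall>q\<in>W'. p \<noteq> q \<longrightarrow> p \<inter> q = {}" using inv by (simp add: Inv_def)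
  have I3: "\<forall>a<t. a \<notin> \<Union>W' \<longrightarrow> (\<forall>v<I+S. v \<noteq> a \<longrightarrow> v \<in> \<Union>W')" using inv by (simp add: Inv_def)
  define U where "U = unpaired I S W' t"
  have fin: "finite U" unfolding U_def unpaired_def by simp
  have ne: "U \<noteq> {}" using True U_def by simp
  have st: "step I S t W' = map_pmf (\<lambda>u. insert {t, u} W') (pmf_of_set U)"
    using True unfolding step_def U_def by simp
  with W fin ne obtain u where u: "u \<in> U" and WW: "W = insert {t,u} W'" by auto
  have tn: "t \<notin> \<Union>W'" using True by simp
  have uU: "u < I+S" "u \<noteq> t" "u \<notin> \<Union>W'" using u unfolding U_def unpaired_def by auto
  have tu: "t < u"
  proof (rule ccontr)
    assume "\<not> t < u"
    hence "u < t" using uU by simp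
    note c = I3
    have "t < I+S" using t by simp
    with c \<open>u < t\<close> uU have "t \<in> \<Union>W'" by blast
    with tn show False by simp
  qed
  have notin: "{t,u} \<notin> W'" using tn by auto
  have inv2: "Inv I S (Suc t) W"
    unfolding Inv_def WW
  proof (intro conjI)
    show "\<forall>p\<in>insert {t, u} W'. \<exists>a b. p = {a, b} \<and> a < b \<and> a < Suc t \<and> b < I + S"
    proof
      fix p assume "p \<in> insert {t, u} W'"
      then consider "p = {t,u}" | "p \<in> W'" by blast
      then show "\<exists>a b. p = {a, b} \<and> a < b \<and> a < Suc t \<and> b < I + S"
      proof cases
        case 1 then show ?thesis using tu uU by (intro exI[of _ t] exI[of _ u]) simp
      next
        case 2 then obtain a b where "p = {a,b}" "a < b" "a < t" "b < I+S" using Inv_pair[OF inv] by blast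
        then show ?thesis by (intro exI[of _ a] exI[of _ b]) simp
      qed
    qed
    show "\<forall>p\<in>insert {t, u} W'. \<forall>q\<in>insert {t, u} W'. p \<noteq> q \<longrightarrow> p \<inter> q = {}"
    proof (intro ballI impI)
      fix p q assume p: "p \<in> insert {t, u} W'" and q: "q \<in> insert {t, u} W'" and pq: "p \<noteq> q"
      show "p \<inter> q = {}"
      proof (cases "p = {t,u}")
        case True then have "q \<in> W'" using q pq by auto
        then show ?thesis using True tn uU by auto
      next
        case False then have pW: "p \<in> W'" using p by auto
        show ?thesis
        proof (cases "q = {t,u}")
          case True then show ?thesis using pW tn uU by auto
        next
          case False then have "q \<in> W'" using q by auto
          then show ?thesis using pW pq I2 by blast
        qed
      qed
    qed
    show "\<forall>a<Suc t. a \<notin> \<Union> (insert {t, u} W') \<longrightarrow> (\<forall>ua<I + S. ua \<noteq> a \<longrightarrow> ua \<in> \<Union> (insert {t, u} W'))"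
    proof (intro allI impI)
      fix a v assume a: "a < Suc t" "a \<notin> \<Union> (insert {t, u} W')" and v: "v < I+S" "v \<noteq> a"
      have "a \<noteq> t" using a by auto
      then have "a < t" using a by simp
      moreover have "a \<notin> \<Union>W'" using a by auto
      ultimately have "v \<in> \<Union>W'" using I3 v by blast
      then show "v \<in> \<Union> (insert {t, u} W')" by auto
    qed
  qed
  have mins: "\<forall>p\<in>W'. Min p < t" using Inv_min[OF inv] by blast
  have "pred t W = W'" unfolding pred_def WW using mins tu notin by auto
  have finW': "finite W'" using Inv_fin[OF inv] .
  have cW: "card W = Suc (card W')" using WW notin finW' by simp
  have inj: "inj_on (\<lambda>u. insert {t, u} W') (set_pmf (pmf_of_set U))"
  proof (rule inj_onI)
    fix x y assume "insert {t, x} W' = insert {t, y} W'"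
    then have "{t,x} \<in> insert {t, y} W'" by blast
    then have "{t,x} = {t,y}" using tn by blast
    then show "x = y" by (metis doubleton_eq_iff)
  qed
  have "pmf (step I S t W') W = pmf (pmf_of_set U) u"
    unfolding st WW using pmf_map_inj[OF inj] u fin ne by simp
  also have "\<dots> = 1 / card U" using u fin ne by simp
  finally have pm: "pmf (step I S t W') W = 1 / card U" .
  have sub: "\<Union>W' \<subseteq> {..<I+S}" using Inv_sub[OF inv] .
  have eq: "{..<I+S} = (U \<union> \<Union>W') \<union> {t}" unfolding U_def unpaired_def using sub t by auto
  have finU: "finite (\<Union>W')" using sub finite_subset by blast
  have d1: "U \<inter> \<Union>W' = {}" unfolding U_def unpaired_def by blast
  have d2: "t \<notin> U \<union> \<Union>W'" unfolding U_def unpaired_def using tn by blast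
  have "card {..<I+S} = card ((U \<union> \<Union>W') \<union> {t})" using eq by simp
  also have "\<dots> = card (U \<union> \<Union>W') + 1" using d2 fin finU by simp
  also have "\<dots> = card U + card (\<Union>W') + 1" using card_Un_disjoint[OF fin finU d1] by simp
  finally have "card {..<I+S} = card U + card (\<Union>W') + 1" .
  hence cU: "card U + 2 * card W' + 1 = I + S" using Inv_card[OF inv] by simp
  hence "real (card U) = real (I+S) - 1 - 2 * real (card W')" by linarith
  then show ?thesis using inv2 \<open>pred t W = W'\<close> pm cW unfolding P_def by simp
qed

definition pp :: "nat \<Rightarrow> nat \<Rightarrow> nat \<Rightarrow> nat set set pmf" where
  "pp I S n = foldl (\<lambda>p t. bind_pmf p (step I S t)) (return_pmf {}) [0..<n]"

lemma pp_Suc: "pp I S (Suc n) = bind_pmf (pp I S n) (step I S n)"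
  by (simp add: pp_def)

lemma main_inv: "n \<le> I \<Longrightarrow> \<forall>W\<in>set_pmf (pp I S n). Inv I S n W \<and> pmf (pp I S n) W = P I S (card W)"
proof (induction n)
  case 0
  have "pp I S 0 = return_pmf {}" by (simp add: pp_def)
  then show ?case by (simp add: Inv_def P_def)
next
  case (Suc n)
  have IH: "\<forall>W\<in>set_pmf (pp I S n). Inv I S n W \<and> pmf (pp I S n) W = P I S (card W)"
    using Suc by simp
  have nI: "n < I" using Suc by simp
  show ?case
  proof
    fix W assume "W \<in> set_pmf (pp I S (Suc n))"
    then obtain W' where W': "W' \<in> set_pmf (pp I S n)" and WW: "W \<in> set_pmf (step I S n W')"
      unfolding pp_Suc by auto
    have invW': "Inv I S n W'" using IH W' by blast
    note sl = step_lemma[OF nI invW' WW]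
    have "pmf (pp I S (Suc n)) W = (\<integral>x. pmf (step I S n x) W \<partial>measure_pmf (pp I S n))"
      unfolding pp_Suc by (rule pmf_bind)
    also have "\<dots> = (\<Sum>a\<in>{pred n W}. pmf (step I S n a) W * pmf (pp I S n) a)"
    proof (rule integral_measure_pmf_real)
      show "finite {pred n W}" by simp
      fix a assume a: "a \<in> set_pmf (pp I S n)" and ne: "pmf (step I S n a) W \<noteq> 0"
      have "W \<in> set_pmf (step I S n a)" using ne by (simp add: set_pmf_iff)
      moreover have "Inv I S n a" using IH a by blast
      ultimately show "a \<in> {pred n W}" using step_lemma[OF nI] by blast
    qed
    also have "\<dots> = pmf (step I S n W') W * P I S (card W')"
      using sl IH W' by simp
    also have "\<dots> = P I S (card W)" using sl by simp
    finally show "Inv I S (Suc n) W \<and> pmf (pp I S (Suc n)) W = P I S (card W)" using sl by simp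
  qed
qed

lemma P_int: "P I S m = (\<Prod>k\<in>{0..int m - 1}. 1 / (real I + real S - 1 - 2 * real_of_int k))"
proof -
  have e: "{0..int m - 1} = int ` {..<m}"
  proof
    show "{0..int m - 1} \<subseteq> int ` {..<m}"
    proof
      fix x assume "x \<in> {0..int m - 1}"
      then have "x = int (nat x)" "nat x < m" by auto
      then show "x \<in> int ` {..<m}" by blast
    qed
  qed auto
  show ?thesis unfolding e P_def
    by (subst prod.reindex) auto
qed

lemma count:
  assumes inv: "Inv I S I W"
  shows "(card W + bb_count I W = I \<and> card W \<le> bb_count I W + S) \<or>
         (card W + bb_count I W + 1 = I \<and> card W = bb_count I W + S)"
proof -
  define B where "B = {p \<in> W. p \<subseteq> {0..<I}}"
  define C where "C = W - B"
  have finW: "finite W" using Inv_fin[OF inv] .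
  have BW: "B \<subseteq> W" unfolding B_def by blast
  have cardW: "card W = card B + card C"
    unfolding C_def using card_Diff_subset[OF finite_subset[OF BW finW] BW] card_mono[OF finW BW] by simp
  have j: "bb_count I W = card B" unfolding bb_count_def B_def by simp
  have I2: "\<forall>p\<in>W. \<forall>q\<in>W. p \<noteq> q \<longrightarrow> p \<inter> q = {}" using inv by (simp add: Inv_def)
  have I3: "\<forall>a<I. a \<notin> \<Union>W \<longrightarrow> (\<forall>v<I+S. v \<noteq> a \<longrightarrow> v \<in> \<Union>W)" using inv by (simp add: Inv_def)
  have sub: "\<Union>W \<subseteq> {..<I+S}" using Inv_sub[OF inv] .
  define X where "X = \<Union>W \<inter> {I..<I+S}"
  define Y where "Y = \<Union>W \<inter> {..<I}"
  have Cmax: "\<And>p. p \<in> C \<Longrightarrow> \<exists>a b. p = {a,b} \<and> a < b \<and> a < I \<and> I \<le> b \<and> b < I+S \<and> Max p = b"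
  proof -
    fix p assume p: "p \<in> C"
    then have pW: "p \<in> W" and nB: "\<not> p \<subseteq> {0..<I}" unfolding C_def B_def by auto
    obtain a b where ab: "p = {a,b}" "a < b" "a < I" "b < I+S" using Inv_pair[OF inv pW] by blast
    have "I \<le> b"
    proof (rule ccontr)
      assume "\<not> I \<le> b"
      then have "p \<subseteq> {0..<I}" using ab by auto
      then show False using nB by simp
    qed
    moreover have "Max p = b" using ab by (simp add: max_def)
    ultimately show "\<exists>a b. p = {a,b} \<and> a < b \<and> a < I \<and> I \<le> b \<and> b < I+S \<and> Max p = b" using ab by blast
  qed
  have inj: "inj_on Max C"
  proof (rule inj_onI)
    fix p q assume p: "p \<in> C" and q: "q \<in> C" and e: "Max p = Max q"
    obtain a b where "p = {a,b}" "Max p = b" using Cmax[OF p] by blast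
    then have "Max p \<in> p" by simp
    obtain a' b' where "q = {a',b'}" "Max q = b'" using Cmax[OF q] by blast
    then have "Max q \<in> q" by simp
    have "p \<in> W" "q \<in> W" using p q unfolding C_def by auto
    show "p = q"
    proof (rule ccontr)
      assume "p \<noteq> q"
      then have "p \<inter> q = {}" using I2 \<open>p \<in> W\<close> \<open>q \<in> W\<close> by blast
      moreover have "Max p \<in> p \<inter> q" using \<open>Max p \<in> p\<close> \<open>Max q \<in> q\<close> e by simp
      ultimately show False by simp
    qed
  qed
  have img: "Max ` C = X"
  proof
    show "Max ` C \<subseteq> X"
    proof
      fix x assume "x \<in> Max ` C"
      then obtain p where p: "p \<in> C" "x = Max p" by blast
      obtain a b where ab: "p = {a,b}" "I \<le> b" "b < I+S" "Max p = b" using Cmax[OF p(1)] by blast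
      have "p \<in> W" using p unfolding C_def by auto
      moreover have "x \<in> p" using ab p by simp
      ultimately have "x \<in> \<Union>W" by blast
      moreover have "x \<in> {I..<I+S}" using ab p by simp
      ultimately show "x \<in> X" unfolding X_def by simp
    qed
    show "X \<subseteq> Max ` C"
    proof
      fix x assume "x \<in> X"
      then obtain p where p: "p \<in> W" "x \<in> p" and x: "I \<le> x" unfolding X_def by auto
      obtain a b where ab: "p = {a,b}" "a < b" "a < I" using Inv_pair[OF inv p(1)] by blast
      have "x = a \<or> x = b" using ab p by simp
      then have xb: "x = b" using ab x by auto
      have "\<not> p \<subseteq> {0..<I}" using p x by auto
      then have "p \<in> C" unfolding C_def B_def using p by simp
      moreover have "Max p = x" using ab xb by (simp add: max_def)
      ultimately show "x \<in> Max ` C" by (metis image_eqI)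
    qed
  qed
  have cX: "card X = card C" using card_image[OF inj] img by simp
  have finU: "finite (\<Union>W)" using sub finite_subset by blast
  have UXY: "\<Union>W = X \<union> Y" unfolding X_def Y_def using sub by auto
  have "card (\<Union>W) = card X + card Y"
  proof -
    have "X \<subseteq> \<Union>W" "Y \<subseteq> \<Union>W" unfolding X_def Y_def by auto
    then have "finite X" "finite Y" using finU finite_subset by blast+
    moreover have "X \<inter> Y = {}" unfolding X_def Y_def by auto
    ultimately show ?thesis unfolding UXY by (rule card_Un_disjoint)
  qed
  hence sumXY: "2 * card W = card X + card Y" using Inv_card[OF inv] by simp
  show ?thesis
  proof (cases "\<forall>a<I. a \<in> \<Union>W")
    case True
    then have "Y = {..<I}" unfolding Y_def by blast
    then have cY: "card Y = I" by simp
    have "X \<subseteq> {I..<I+S}" unfolding X_def by auto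
    then have "card X \<le> S" using card_mono[of "{I..<I+S}" X] by simp
    then show ?thesis using cY cX sumXY cardW j by linarith
  next
    case False
    then obtain a where a: "a < I" "a \<notin> \<Union>W" by blast
    then have all: "\<forall>v<I+S. v \<noteq> a \<longrightarrow> v \<in> \<Union>W" using I3 by blast
    have "{I..<I+S} \<subseteq> \<Union>W"
    proof
      fix v assume "v \<in> {I..<I+S}"
      then have "v < I+S" "v \<noteq> a" using a by auto
      then show "v \<in> \<Union>W" using all by blast
    qed
    then have "X = {I..<I+S}" unfolding X_def by blast
    then have cX2: "card X = S" by simp
    have "{..<I} - {a} \<subseteq> \<Union>W"
    proof
      fix v assume "v \<in> {..<I} - {a}"
      then have "v < I+S" "v \<noteq> a" by auto
      then show "v \<in> \<Union>W" using all by blast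
    qed
    then have "Y = {..<I} - {a}" unfolding Y_def using a by blast
    then have cY: "card Y = I - 1" using a by simp
    show ?thesis using cY cX cX2 sumXY cardW j a by linarith
  qed
qed

lemma wiring_pp: "wiring_pmf I S = pp I S I"
  by (simp add: wiring_pmf_def pp_def)

lemma possible_facts:
  assumes "possible_wiring I S W"
  shows "Inv I S I W \<and> pmf (wiring_pmf I S) W = P I S (card W)"
proof -
  have "W \<in> set_pmf (pp I S I)" using assms unfolding possible_wiring_def wiring_pp
    by (simp add: set_pmf_iff)
  then show ?thesis using main_inv[of I I S] unfolding wiring_pp by blast
qed

theorem lemma2:
  fixes I S j :: nat
  shows "((j > I div 2 \<or> j < L I S) \<longrightarrow>
           (\<forall>W. possible_wiring I S W \<longrightarrow> bb_count I W \<noteq> j)) \<and>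
         (L I S \<le> j \<and> j \<le> I div 2 \<longrightarrow>
           (\<forall>W. possible_wiring I S W \<and> bb_count I W = j \<longrightarrow>
              pmf (wiring_pmf I S) W =
                (\<Prod>k\<in>{0..int I - int j - 1 - (if dagger I S j then 1 else 0)}.
                   1 / (real I + real S - 1 - 2 * real_of_int k))))"
proof (intro conjI impI allI)
  fix W assume h: "I div 2 < j \<or> j < L I S" and pw: "possible_wiring I S W"
  show "bb_count I W \<noteq> j"
  proof
    assume bj: "bb_count I W = j"
    have c: "(card W + j = I \<and> card W \<le> j + S) \<or> (card W + j + 1 = I \<and> card W = j + S)"
      using count[of I S W] possible_facts[OF pw] bj by simp
    have "j \<le> card W \<or> True" by simp
    from c show False
    proof
      assume a: "card W + j = I \<and> card W \<le> j + S"
      have jm: "j \<le> card W"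
      proof -
        have "bb_count I W \<le> card W" unfolding bb_count_def
          using Inv_fin possible_facts[OF pw] by (intro card_mono) auto
        then show ?thesis using bj by simp
      qed
      show False using h a jm unfolding L_def by (auto split: if_splits; presburger)
    next
      assume a: "card W + j + 1 = I \<and> card W = j + S"
      show False using h a unfolding L_def by (auto split: if_splits; presburger)
    qed
  qed
next
  fix W assume h: "L I S \<le> j \<and> j \<le> I div 2" and pw: "possible_wiring I S W \<and> bb_count I W = j"
  have pf: "Inv I S I W \<and> pmf (wiring_pmf I S) W = P I S (card W)" using possible_facts pw by blast
  have c: "(card W + j = I \<and> card W \<le> j + S) \<or> (card W + j + 1 = I \<and> card W = j + S)"
    using count[of I S W] pf pw by simp
  have e: "int I - int j - 1 - (if dagger I S j then 1 else 0) = int (card W) - 1"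
    using c unfolding dagger_def by auto
  show "pmf (wiring_pmf I S) W = (\<Prod>k\<in>{0..int I - int j - 1 - (if dagger I S j then 1 else 0)}.
                   1 / (real I + real S - 1 - 2 * real_of_int k))"
    unfolding e using pf P_int by simp
qed

end
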